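(* Consider the one-dimensional elliptic optimal control problem with random inputs $\xi=(\xi_1,\xi_2,\xi_3,\xi_4)\in[-1,1]^4$ described in the context, discretized in space by $\hat N$ nodal finite element basis functions, and consider the linear system solved in the final iteration of the approximate Newton method, namely, for every $\xi$, $$ \begin{bmatrix} \mathbf{M}_y & 0 & \mathbf{A}(\xi_1) \\ 0 & \mathbf{M}_u & -\mathbf{B}^\top \\ \mathbf{A}(\xi_1) & -\mathbf{B} & 0 \end{bmatrix} \begin{bmatrix} \mathbf{y}(\xi) \\ \mathbf{u}(\xi) \\ \boldsymbol\lambda(\xi) \end{bmatrix} = \begin{bmatrix} \mathbf{M}_y\mathbf{y}_d \\ 0 \\ -\mathbf{g}(\xi_2) - \mathbf{b}_3(\xi_3) - \mathbf{b}_4(\xi_4) \end{bmatrix}, $$ with $\mathbf{y}(\xi),\mathbf{u}(\xi),\boldsymbol\lambda(\xi)\in\mathbb{R}^{\hat N}$. Then the solution admits an exact (block) tensor-train decomposition of TT ranks not greater than $7$: there exist a matrix-valued function $Z^{(1)}(\xi_1)\in\mathbb{R}^{3\hat N\times r_1}$ and matrix-valued functions $z^{(k)}(\xi_k)\in\mathbb{R}^{r_{k-1}\times r_k}$, $k=2,3,4$, with $r_4=1$ and $r_1,r_2,r_3\le 7$, such that for all $\xi$ $$ \begin{bmatrix} \mathbf{y}(\xi) \\ \mathbf{u}(\xi) \\ \boldsymbol\lambda(\xi) \end{bmatrix} = Z^{(1)}(\xi_1)\, z^{(2)}(\xi_2)\, z^{(3)}(\xi_3)\, z^{(4)}(\xi_4).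 $$
   Context: The underlying problem: minimize $\mathbb{E}\big[\tfrac12\|y(\cdot,\xi)-y_d\|^2_{L^2(D)} + \tfrac{\alpha}{2}\|u(\cdot,\xi)\|^2_{L^2(D)}\big] + \beta\int_D\big(\int_\Xi u(x,\xi)^2\rho(\xi)d\xi+\varepsilon^2\big)^{1/2}dx$ subject to $\nu(\xi)\Delta y(x,\xi) = g(x,\xi)+u(x,\xi)$ on $D=(0,1)$, with $\nu(\xi)=10^{\xi_1-2}$, $g(x,\xi)=\xi_2/100$, boundary conditions $y|_{x=0}=-1-\xi_3/1000$, $y|_{x=1}=-(2+\xi_4)/1000$, $\xi\sim\mathcal{U}(-1,1)^4$, $y_d(x)=-\sin(50x/\pi)$, $\alpha,\beta\ge0$, $\varepsilon>0$. In the discretized linear system: $\mathbf{M}_y\in\mathbb{R}^{\hat N\times\hat N}$ is the (symmetric positive definite, $\xi$-independent) state mass matrix; $\mathbf{A}(\xi_1)$ is the symmetric invertible stiffness matrix of $\nu(\xi_1)\Delta$ (depending only on $\xi_1$); $\mathbf{B}$ is the $\xi$-independent actuator matrix; $\mathbf{y}_d$ is the $\xi$-independent discretized desired state; $\mathbf{g}(\xi_2)$ is the discretized source depending only on $\xi_2$; $\mathbf{b}_3(\xi_3)$ and $\mathbf{b}_4(\xi_4)$ are the right-hand-side contributions of the left and right boundary conditions, depending only on $\xi_3$ and $\xi_4$ respectively; $\mathbf{M}_u$ is the control block of the approximate Hessian, $\mathbf{M}_u=\alpha\mathbf{M} + \mathrm{diag}_i\big(\beta\hat w_i/\sqrt{\sum_{j}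 w_j (u^{\mathrm{prev}}_{i,j})^2+\varepsilon^2}\big)$ with $\mathbf{M}$ the control mass matrix, $\hat w_i>0$ spatial quadrature weights, $w_j>0$ random-variable quadrature weights and $u^{\mathrm{prev}}$ the previous iterate; it is symmetric positive definite and independent of $\xi$. TT ranks refer to the sizes $r_k$ of the inner summation indices in the factorization, with the spatial index carried by the first factor. *)

theory Defs
  imports "Jordan_Normal_Form.Matrix"
begin

definition spd_mat :: "nat \<Rightarrow> real mat \<Rightarrow> bool" where
  "spd_mat n M \<longleftrightarrow> M \<in> carrier_mat n n \<and> transpose_mat M = M \<and>
     (\<forall>x \<in> carrier_vec n. x \<noteq> 0\<^sub>v n \<longrightarrow> x \<bullet> (M *\<^sub>v x) > 0)"

abbreviation I1 :: "real set" where "I1 \<equiv> {-1..1}"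

end

theory Submission
  imports Defs
begin


lemma vec_sub_zero: "(a::real vec) \<in> carrier_vec n \<Longrightarrow> b \<in> carrier_vec n \<Longrightarrow> a - b = 0\<^sub>v n \<Longrightarrow> a = b"
proof (rule eq_vecI)
  fix i assume a: "a \<in> carrier_vec n" and b: "b \<in> carrier_vec n" and e: "a - b = 0\<^sub>v n" and i: "i < dim_vec b"
  have "(a - b) $ i = 0" using e i b by simp
  thus "a $ i = b $ i" using i a b by simp
qed auto

lemma vec_add_zero: "(a::real vec) \<in> carrier_vec n \<Longrightarrow> b \<in> carrier_vec n \<Longrightarrow> a + b = 0\<^sub>v n \<Longrightarrow> a = - b"
proof (rule eq_vecI)
  fix i assume a: "a \<in> carrier_vec n" and b: "b \<in> carrier_vec n" and e: "a + b = 0\<^sub>v n" and i: "i < dim_vec (- b)"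
  have "(a + b) $ i = 0" using e i b by simp
  thus "a $ i = (- b) $ i" using i a b by simp
qed auto

lemma homog:
  assumes My: "spd_mat N My" and Mu: "spd_mat N Mu" and B: "B \<in> carrier_mat N N"
    and A: "A \<in> carrier_mat N N" and As: "transpose_mat A = A" and Ai: "invertible_mat A"
    and dy: "dy \<in> carrier_vec N" and du: "du \<in> carrier_vec N" and dl: "dl \<in> carrier_vec N"
    and e1: "My *\<^sub>v dy + A *\<^sub>v dl = 0\<^sub>v N"
    and e2: "Mu *\<^sub>v du - transpose_mat B *\<^sub>v dl = 0\<^sub>v N"
    and e3: "A *\<^sub>v dy - B *\<^sub>v du = 0\<^sub>v N"
  shows "dy = 0\<^sub>v N \<and> du = 0\<^sub>v N \<and> dl = 0\<^sub>v N"
proof -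
  have Myc: "My \<in> carrier_mat N N" and Muc: "Mu \<in> carrier_mat N N" using My Mu by (auto simp: spd_mat_def)
  have BT: "transpose_mat B \<in> carrier_mat N N" using B by auto
  have h1: "My *\<^sub>v dy = - (A *\<^sub>v dl)" using vec_add_zero[OF _ _ e1] Myc A dy dl by auto
  have h2: "Mu *\<^sub>v du = transpose_mat B *\<^sub>v dl" using vec_sub_zero[OF _ _ e2] Muc BT du dl by auto
  have h3: "A *\<^sub>v dy = B *\<^sub>v du" using vec_sub_zero[OF _ _ e3] A B du dy by auto
  have "dy \<bullet> (A *\<^sub>v dl) = (transpose_mat A *\<^sub>v dy) \<bullet> dl"
    using transpose_vec_mult_scalar[OF A dl dy] by simp
  also have "\<dots> = (B *\<^sub>v du) \<bullet> dl" using As h3 by simp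
  also have "\<dots> = dl \<bullet> (B *\<^sub>v du)" by (rule comm_scalar_prod[of _ N], use B du dl in auto)
  also have "\<dots> = (transpose_mat B *\<^sub>v dl) \<bullet> du" using transpose_vec_mult_scalar[OF B du dl] by simp
  also have "\<dots> = du \<bullet> (Mu *\<^sub>v du)" using h2 comm_scalar_prod[of du N "transpose_mat B *\<^sub>v dl"] BT du dl by simp
  finally have k: "dy \<bullet> (A *\<^sub>v dl) = du \<bullet> (Mu *\<^sub>v du)" .
  have "dy \<bullet> (My *\<^sub>v dy) = - (dy \<bullet> (A *\<^sub>v dl))" using h1 dy A dl
    by (simp add: scalar_prod_uminus_right)
  hence sum0: "dy \<bullet> (My *\<^sub>v dy) + du \<bullet> (Mu *\<^sub>v du) = 0" using k by simp
  have p1: "dy \<noteq> 0\<^sub>v N \<Longrightarrow> dy \<bullet> (My *\<^sub>v dy) > 0" using My dy by (auto simp: spd_mat_def)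
  have p2: "du \<noteq> 0\<^sub>v N \<Longrightarrow> du \<bullet> (Mu *\<^sub>v du) > 0" using Mu du by (auto simp: spd_mat_def)
  have z1: "dy = 0\<^sub>v N" and z2: "du = 0\<^sub>v N" using sum0 p1 p2 dy du Myc Muc by (cases "dy = 0\<^sub>v N"; cases "du = 0\<^sub>v N"; auto)+
  have Adl: "A *\<^sub>v dl = 0\<^sub>v N"
  proof (rule eq_vecI)
    fix i assume i: "i < dim_vec (0\<^sub>v N :: real vec)"
    have "(My *\<^sub>v dy) $ i = 0" using z1 Myc i by simp
    moreover have "(My *\<^sub>v dy) $ i = - ((A *\<^sub>v dl) $ i)" using h1 i A by simp
    ultimately show "(A *\<^sub>v dl) $ i = 0\<^sub>v N $ i" using i by simp
  qed (use A in auto)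
  obtain C where C1: "A * C = 1\<^sub>m (dim_row A)" and C2: "C * A = 1\<^sub>m (dim_row C)"
    using Ai unfolding invertible_mat_def inverts_mat_def by auto
  have Cc: "C \<in> carrier_mat N N" using C1 C2 A
    by (metis carrier_matD carrier_matI index_mult_mat(2,3) index_one_mat(2,3))
  have "dl = (C * A) *\<^sub>v dl" using C2 Cc dl by auto
  also have "\<dots> = C *\<^sub>v (A *\<^sub>v dl)" using Cc A dl by simp
  also have "\<dots> = 0\<^sub>v N" using Adl Cc by (auto intro!: eq_vecI)
  finally show ?thesis using z1 z2 by auto
qed


lemma comb:
  fixes M :: "real mat"
  assumes M: "M \<in> carrier_mat n n" and v: "v0 \<in> carrier_vec n" "v1 \<in> carrier_vec n" "v2 \<in> carrier_vec n" "v3 \<in> carrier_vec n"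
    and i: "i < n"
  shows "(M *\<^sub>v (v0 + a \<cdot>\<^sub>v (v1 - v0) + b \<cdot>\<^sub>v (v2 - v0) + c \<cdot>\<^sub>v (v3 - v0))) $ i =
     (M *\<^sub>v v0) $ i + a * ((M *\<^sub>v v1) $ i - (M *\<^sub>v v0) $ i) + b * ((M *\<^sub>v v2) $ i - (M *\<^sub>v v0) $ i)
      + c * ((M *\<^sub>v v3) $ i - (M *\<^sub>v v0) $ i)"
  using assms by (simp add: mult_add_distrib_mat_vec[of M n n] mult_minus_distrib_mat_vec[of M n n] mult_mat_vec[of M n n])

lemma z_prod:
  fixes x2 x3 x4 :: real
  defines "z4 \<equiv> mat 2 1 (\<lambda>(k,_). if k = 0 then 1 else x4)"
    and "z3 \<equiv> mat 3 2 (\<lambda>(j,k). if j = 0 then (if k = 0 then 1 else 0) else if j = 1 then (if k = 0 then x3 else 0) else (if k = 1 then 1 else 0))"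
    and "z2 \<equiv> mat 4 3 (\<lambda>(j,k). if j = 0 then (if k = 0 then 1 else 0) else if j = 1 then (if k = 0 then x2 else 0)
              else if j = 2 then (if k = 1 then 1 else 0) else (if k = 2 then 1 else 0))"
  shows "z2 * (z3 * z4) = mat 4 1 (\<lambda>(j,_). if j = 0 then 1 else if j = 1 then x2 else if j = 2 then x3 else x4)"
  unfolding assms
  by (rule eq_matI) (auto simp: scalar_prod_def numeral_eq_Suc lessThan_Suc atLeast0LessThan less_Suc_eq)


lemma colprod:
  fixes x2 x3 x4 :: real
  assumes i: "i < n"
  shows "col (mat n 4 f * mat 4 1 (\<lambda>(j,_). if j = 0 then 1 else if j = 1 then x2 else if j = 2 then x3 else x4)) 0 $ i
     = f (i,0) + f (i,1) * x2 + f (i,2) * x3 + f (i,3) * x4"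
  using i by (simp add: scalar_prod_def numeral_eq_Suc lessThan_Suc atLeast0LessThan)

lemma app3:
  assumes "dim_vec (a :: real vec) = N" "dim_vec b = N" "dim_vec c = N" "i < 3 * N"
  shows "(a @\<^sub>v b @\<^sub>v c) $ i = (if i < N then a $ i else if i < 2 * N then b $ (i - N) else c $ (i - N - N))"
proof -
  have "(a @\<^sub>v b @\<^sub>v c) $ i = (if i < N then a $ i else (b @\<^sub>v c) $ (i - N))"
    using assms by (simp add: index_append_vec)
  moreover have "\<not> i < N \<Longrightarrow> (b @\<^sub>v c) $ (i - N) = (if i - N < N then b $ (i - N) else c $ (i - N - N))"
    using assms by (simp add: index_append_vec)
  moreover have "\<not> i < N \<Longrightarrow> (i - N < N) = (i < 2 * N)" by arith
  ultimately show ?thesis by auto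
qed

lemma idx_comb:
  assumes "v0 \<in> carrier_vec n" "v1 \<in> carrier_vec n" "v2 \<in> carrier_vec n" "v3 \<in> carrier_vec n" "j < n"
  shows "(v0 + a \<cdot>\<^sub>v (v1 - v0) + b \<cdot>\<^sub>v (v2 - v0) + c \<cdot>\<^sub>v (v3 - (v0 :: real vec))) $ j
    = v0 $ j + a * (v1 $ j - v0 $ j) + b * (v2 $ j - v0 $ j) + c * (v3 $ j - v0 $ j)"
  using assms by simp

lemma ar1:
  fixes p q p0 q0 p2 q2 p3 q3 p4 q4 a b d k :: real
  assumes "p0 + q0 = k" "p2 + q2 = k" "p3 + q3 = k" "p4 + q4 = k" "p + q = k"
  shows "(p - (p0 + a * (p2 - p0) + b * (p3 - p0) + d * (p4 - p0))) + (q - (q0 + a * (q2 - q0) + b * (q3 - q0) + d * (q4 - q0))) = 0"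
proof -
  have "(p - (p0 + a * (p2 - p0) + b * (p3 - p0) + d * (p4 - p0))) + (q - (q0 + a * (q2 - q0) + b * (q3 - q0) + d * (q4 - q0)))
    = (p + q - k) - (p0 + q0 - k) - a * ((p2 + q2 - k) - (p0 + q0 - k)) - b * ((p3 + q3 - k) - (p0 + q0 - k)) - d * ((p4 + q4 - k) - (p0 + q0 - k))"
    by (simp add: algebra_simps)
  also have "\<dots> = 0" using assms by simp
  finally show ?thesis .
qed

lemma ar2:
  fixes p q p0 q0 p2 q2 p3 q3 p4 q4 a b d :: real
  assumes "p0 - q0 = 0" "p2 - q2 = 0" "p3 - q3 = 0" "p4 - q4 = 0" "p - q = 0"
  shows "(p - (p0 + a * (p2 - p0) + b * (p3 - p0) + d * (p4 - p0))) - (q - (q0 + a * (q2 - q0) + b * (q3 - q0) + d * (q4 - q0))) = 0"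
proof -
  have "(p - (p0 + a * (p2 - p0) + b * (p3 - p0) + d * (p4 - p0))) - (q - (q0 + a * (q2 - q0) + b * (q3 - q0) + d * (q4 - q0)))
    = (p - q) - (p0 - q0) - a * ((p2 - q2) - (p0 - q0)) - b * ((p3 - q3) - (p0 - q0)) - d * ((p4 - q4) - (p0 - q0))"
    by (simp add: algebra_simps)
  also have "\<dots> = 0" using assms by simp
  finally show ?thesis .
qed

lemma ar3:
  fixes p q p0 q0 p2 q2 p3 q3 p4 q4 a b d K al be ga :: real
  assumes "p0 - q0 = K + 0 * al + 0 * be + 0 * ga" "p2 - q2 = K + 1 * al + 0 * be + 0 * ga" "p3 - q3 = K + 0 * al + 1 * be + 0 * ga" "p4 - q4 = K + 0 * al + 0 * be + 1 * ga" "p - q = K + a * al + b * be + d * ga"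
  shows "(p - (p0 + a * (p2 - p0) + b * (p3 - p0) + d * (p4 - p0))) - (q - (q0 + a * (q2 - q0) + b * (q3 - q0) + d * (q4 - q0))) = 0"
proof -
  have "(p - (p0 + a * (p2 - p0) + b * (p3 - p0) + d * (p4 - p0))) - (q - (q0 + a * (q2 - q0) + b * (q3 - q0) + d * (q4 - q0)))
    = (p - q - (K + a * al + b * be + d * ga)) - (p0 - q0 - K) - a * ((p2 - q2 - K - al) - (p0 - q0 - K))
      - b * ((p3 - q3 - K - be) - (p0 - q0 - K)) - d * ((p4 - q4 - K - ga) - (p0 - q0 - K))"
    by (simp add: algebra_simps)
  also have "\<dots> = 0" using assms by simp
  finally show ?thesis .
qed

theorem mainTheorem1:
  fixes N :: nat
    and My Mu B :: "real mat"
    and A :: "real \<Rightarrow> real mat"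
    and yd g0 c3 c4 :: "real vec"
    and g b3 b4 :: "real \<Rightarrow> real vec"
    and y u lam :: "real \<Rightarrow> real \<Rightarrow> real \<Rightarrow> real \<Rightarrow> real vec"
  assumes My: "spd_mat N My"
    and Mu: "spd_mat N Mu"
    and B: "B \<in> carrier_mat N N"
    and A_carrier: "\<And>x1. x1 \<in> I1 \<Longrightarrow> A x1 \<in> carrier_mat N N"
    and A_sym: "\<And>x1. x1 \<in> I1 \<Longrightarrow> transpose_mat (A x1) = A x1"
    and A_inv: "\<And>x1. x1 \<in> I1 \<Longrightarrow> invertible_mat (A x1)"
    and yd: "yd \<in> carrier_vec N"
    and g0: "g0 \<in> carrier_vec N" and c3: "c3 \<in> carrier_vec N" and c4: "c4 \<in> carrier_vec N"
    and g_def: "\<And>x2. g x2 = (x2 / 100) \<cdot>\<^sub>v g0"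
    and b3_def: "\<And>x3. b3 x3 = (- 1 - x3 / 1000) \<cdot>\<^sub>v c3"
    and b4_def: "\<And>x4. b4 x4 = (- (2 + x4) / 1000) \<cdot>\<^sub>v c4"
    and sol_carrier: "\<And>x1 x2 x3 x4. \<lbrakk>x1 \<in> I1; x2 \<in> I1; x3 \<in> I1; x4 \<in> I1\<rbrakk> \<Longrightarrow>
        y x1 x2 x3 x4 \<in> carrier_vec N \<and> u x1 x2 x3 x4 \<in> carrier_vec N \<and> lam x1 x2 x3 x4 \<in> carrier_vec N"
    and eq1: "\<And>x1 x2 x3 x4. \<lbrakk>x1 \<in> I1; x2 \<in> I1; x3 \<in> I1; x4 \<in> I1\<rbrakk> \<Longrightarrow>
        My *\<^sub>v y x1 x2 x3 x4 + A x1 *\<^sub>v lam x1 x2 x3 x4 = My *\<^sub>v yd"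
    and eq2: "\<And>x1 x2 x3 x4. \<lbrakk>x1 \<in> I1; x2 \<in> I1; x3 \<in> I1; x4 \<in> I1\<rbrakk> \<Longrightarrow>
        Mu *\<^sub>v u x1 x2 x3 x4 - transpose_mat B *\<^sub>v lam x1 x2 x3 x4 = 0\<^sub>v N"
    and eq3: "\<And>x1 x2 x3 x4. \<lbrakk>x1 \<in> I1; x2 \<in> I1; x3 \<in> I1; x4 \<in> I1\<rbrakk> \<Longrightarrow>
        A x1 *\<^sub>v y x1 x2 x3 x4 - B *\<^sub>v u x1 x2 x3 x4 = - g x2 - b3 x3 - b4 x4"
  shows "\<exists>(r1::nat) (r2::nat) (r3::nat) (Z1 :: real \<Rightarrow> real mat) (z2 :: real \<Rightarrow> real mat)
            (z3 :: real \<Rightarrow> real mat) (z4 :: real \<Rightarrow> real mat).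
           r1 \<le> 7 \<and> r2 \<le> 7 \<and> r3 \<le> 7 \<and>
           (\<forall>x1 \<in> I1. Z1 x1 \<in> carrier_mat (3 * N) r1) \<and>
           (\<forall>x2 \<in> I1. z2 x2 \<in> carrier_mat r1 r2) \<and>
           (\<forall>x3 \<in> I1. z3 x3 \<in> carrier_mat r2 r3) \<and>
           (\<forall>x4 \<in> I1. z4 x4 \<in> carrier_mat r3 1) \<and>
           (\<forall>x1 \<in> I1. \<forall>x2 \<in> I1. \<forall>x3 \<in> I1. \<forall>x4 \<in> I1.
              y x1 x2 x3 x4 @\<^sub>v u x1 x2 x3 x4 @\<^sub>v lam x1 x2 x3 x4
                = col (Z1 x1 * z2 x2 * z3 x3 * z4 x4) 0)"
proof -
  have Myc: "My \<in> carrier_mat N N" and Muc: "Mu \<in> carrier_mat N N" using My Mu by (auto simp: spd_mat_def)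
  have BT: "transpose_mat B \<in> carrier_mat N N" using B by auto
  have I01: "(0::real) \<in> I1" "(1::real) \<in> I1" by auto
  define Y where "Y x1 x2 x3 x4 = y x1 0 0 0 + x2 \<cdot>\<^sub>v (y x1 1 0 0 - y x1 0 0 0) + x3 \<cdot>\<^sub>v (y x1 0 1 0 - y x1 0 0 0) + x4 \<cdot>\<^sub>v (y x1 0 0 1 - y x1 0 0 0)" for x1 x2 x3 x4 :: real
  define U where "U x1 x2 x3 x4 = u x1 0 0 0 + x2 \<cdot>\<^sub>v (u x1 1 0 0 - u x1 0 0 0) + x3 \<cdot>\<^sub>v (u x1 0 1 0 - u x1 0 0 0) + x4 \<cdot>\<^sub>v (u x1 0 0 1 - u x1 0 0 0)" for x1 x2 x3 x4 :: real
  define L where "L x1 x2 x3 x4 = lam x1 0 0 0 + x2 \<cdot>\<^sub>v (lam x1 1 0 0 - lam x1 0 0 0) + x3 \<cdot>\<^sub>v (lam x1 0 1 0 - lam x1 0 0 0) + x4 \<cdot>\<^sub>v (lam x1 0 0 1 - lam x1 0 0 0)" for x1 x2 x3 x4 :: real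
  have mi: "(M *\<^sub>v (v - w)) $ i = (M *\<^sub>v v) $ i - (M *\<^sub>v w) $ i"
    if "M \<in> carrier_mat N N" "v \<in> carrier_vec N" "w \<in> carrier_vec N" "i < N" for M :: "real mat" and v w i
    using that by (simp add: mult_minus_distrib_mat_vec[of M N N])
  have aff: "y x1 x2 x3 x4 = Y x1 x2 x3 x4 \<and> u x1 x2 x3 x4 = U x1 x2 x3 x4 \<and> lam x1 x2 x3 x4 = L x1 x2 x3 x4"
    if xs: "x1 \<in> I1" "x2 \<in> I1" "x3 \<in> I1" "x4 \<in> I1" for x1 x2 x3 x4
  proof -
    have Ac: "A x1 \<in> carrier_mat N N" using A_carrier xs(1) .
    have Cy: "y x1 b c d \<in> carrier_vec N" and Cu: "u x1 b c d \<in> carrier_vec N" and Cl: "lam x1 b c d \<in> carrier_vec N"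
      if "b \<in> I1" "c \<in> I1" "d \<in> I1" for b c d using sol_carrier[OF xs(1) that] by auto
    note Y0 = Cy[OF I01(1) I01(1) I01(1)] and Y2 = Cy[OF I01(2) I01(1) I01(1)]
      and Y3 = Cy[OF I01(1) I01(2) I01(1)] and Y4 = Cy[OF I01(1) I01(1) I01(2)]
    note U0 = Cu[OF I01(1) I01(1) I01(1)] and U2 = Cu[OF I01(2) I01(1) I01(1)]
      and U3 = Cu[OF I01(1) I01(2) I01(1)] and U4 = Cu[OF I01(1) I01(1) I01(2)]
    note L0 = Cl[OF I01(1) I01(1) I01(1)] and L2 = Cl[OF I01(2) I01(1) I01(1)]
      and L3 = Cl[OF I01(1) I01(2) I01(1)] and L4 = Cl[OF I01(1) I01(1) I01(2)]
    note YX = Cy[OF xs(2-4)] and UX = Cu[OF xs(2-4)] and LX = Cl[OF xs(2-4)]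
    have YC: "Y x1 x2 x3 x4 \<in> carrier_vec N" using Y0 Y2 Y3 Y4 by (simp add: Y_def)
    have UC: "U x1 x2 x3 x4 \<in> carrier_vec N" using U0 U2 U3 U4 by (simp add: U_def)
    have LC: "L x1 x2 x3 x4 \<in> carrier_vec N" using L0 L2 L3 L4 by (simp add: L_def)
    have combY: "(M *\<^sub>v Y x1 x2 x3 x4) $ i = (M *\<^sub>v y x1 0 0 0) $ i + x2 * ((M *\<^sub>v y x1 1 0 0) $ i - (M *\<^sub>v y x1 0 0 0) $ i)
       + x3 * ((M *\<^sub>v y x1 0 1 0) $ i - (M *\<^sub>v y x1 0 0 0) $ i) + x4 * ((M *\<^sub>v y x1 0 0 1) $ i - (M *\<^sub>v y x1 0 0 0) $ i)"
      if "M \<in> carrier_mat N N" "i < N" for M i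
      unfolding Y_def using comb[OF that(1) Y0 Y2 Y3 Y4 that(2)] .
    have combU: "(M *\<^sub>v U x1 x2 x3 x4) $ i = (M *\<^sub>v u x1 0 0 0) $ i + x2 * ((M *\<^sub>v u x1 1 0 0) $ i - (M *\<^sub>v u x1 0 0 0) $ i)
       + x3 * ((M *\<^sub>v u x1 0 1 0) $ i - (M *\<^sub>v u x1 0 0 0) $ i) + x4 * ((M *\<^sub>v u x1 0 0 1) $ i - (M *\<^sub>v u x1 0 0 0) $ i)"
      if "M \<in> carrier_mat N N" "i < N" for M i
      unfolding U_def using comb[OF that(1) U0 U2 U3 U4 that(2)] .
    have combL: "(M *\<^sub>v L x1 x2 x3 x4) $ i = (M *\<^sub>v lam x1 0 0 0) $ i + x2 * ((M *\<^sub>v lam x1 1 0 0) $ i - (M *\<^sub>v lam x1 0 0 0) $ i)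
       + x3 * ((M *\<^sub>v lam x1 0 1 0) $ i - (M *\<^sub>v lam x1 0 0 0) $ i) + x4 * ((M *\<^sub>v lam x1 0 0 1) $ i - (M *\<^sub>v lam x1 0 0 0) $ i)"
      if "M \<in> carrier_mat N N" "i < N" for M i
      unfolding L_def using comb[OF that(1) L0 L2 L3 L4 that(2)] .
    let ?dy = "y x1 x2 x3 x4 - Y x1 x2 x3 x4"
    let ?du = "u x1 x2 x3 x4 - U x1 x2 x3 x4"
    let ?dl = "lam x1 x2 x3 x4 - L x1 x2 x3 x4"
    have dC: "?dy \<in> carrier_vec N" "?du \<in> carrier_vec N" "?dl \<in> carrier_vec N" using YX UX LX YC UC LC by auto
    have h1: "My *\<^sub>v ?dy + A x1 *\<^sub>v ?dl = 0\<^sub>v N"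
    proof (rule eq_vecI)
      fix i assume "i < dim_vec (0\<^sub>v N :: real vec)" hence i: "i < N" by simp
      have e: "(My *\<^sub>v y x1 b c d) $ i + (A x1 *\<^sub>v lam x1 b c d) $ i = (My *\<^sub>v yd) $ i"
        if "b \<in> I1" "c \<in> I1" "d \<in> I1" for b c d
      proof -
        have "(My *\<^sub>v y x1 b c d + A x1 *\<^sub>v lam x1 b c d) $ i = (My *\<^sub>v yd) $ i" using eq1[OF xs(1) that] by simp
        thus ?thesis using i Ac by simp
      qed
      have "(My *\<^sub>v ?dy + A x1 *\<^sub>v ?dl) $ i = (My *\<^sub>v ?dy) $ i + (A x1 *\<^sub>v ?dl) $ i" using i Ac by simp
      also have "\<dots> = ((My *\<^sub>v y x1 x2 x3 x4) $ i - (My *\<^sub>v Y x1 x2 x3 x4) $ i) + ((A x1 *\<^sub>v lam x1 x2 x3 x4) $ i - (A x1 *\<^sub>v L x1 x2 x3 x4) $ i)"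
        using mi[OF Myc YX YC i] mi[OF Ac LX LC i] by simp
      also have "\<dots> = 0" unfolding combY[OF Myc i] combL[OF Ac i]
        by (rule ar1[OF e[OF I01(1) I01(1) I01(1)] e[OF I01(2) I01(1) I01(1)] e[OF I01(1) I01(2) I01(1)] e[OF I01(1) I01(1) I01(2)] e[OF xs(2-4)]])
      finally show "(My *\<^sub>v ?dy + A x1 *\<^sub>v ?dl) $ i = 0\<^sub>v N $ i" using i by simp
    qed (use Myc Ac in simp)
    have h2: "Mu *\<^sub>v ?du - transpose_mat B *\<^sub>v ?dl = 0\<^sub>v N"
    proof (rule eq_vecI)
      fix i assume "i < dim_vec (0\<^sub>v N :: real vec)" hence i: "i < N" by simp
      have e: "(Mu *\<^sub>v u x1 b c d) $ i - (transpose_mat B *\<^sub>v lam x1 b c d) $ i = 0"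
        if "b \<in> I1" "c \<in> I1" "d \<in> I1" for b c d
      proof -
        have "(Mu *\<^sub>v u x1 b c d - transpose_mat B *\<^sub>v lam x1 b c d) $ i = 0\<^sub>v N $ i" using eq2[OF xs(1) that] by simp
        thus ?thesis using i BT by simp
      qed
      have "(Mu *\<^sub>v ?du - transpose_mat B *\<^sub>v ?dl) $ i = (Mu *\<^sub>v ?du) $ i - (transpose_mat B *\<^sub>v ?dl) $ i" using i BT by simp
      also have "\<dots> = ((Mu *\<^sub>v u x1 x2 x3 x4) $ i - (Mu *\<^sub>v U x1 x2 x3 x4) $ i) - ((transpose_mat B *\<^sub>v lam x1 x2 x3 x4) $ i - (transpose_mat B *\<^sub>v L x1 x2 x3 x4) $ i)"
        using mi[OF Muc UX UC i] mi[OF BT LX LC i] by simp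
      also have "\<dots> = 0" unfolding combU[OF Muc i] combL[OF BT i]
        by (rule ar2[OF e[OF I01(1) I01(1) I01(1)] e[OF I01(2) I01(1) I01(1)] e[OF I01(1) I01(2) I01(1)] e[OF I01(1) I01(1) I01(2)] e[OF xs(2-4)]])
      finally show "(Mu *\<^sub>v ?du - transpose_mat B *\<^sub>v ?dl) $ i = 0\<^sub>v N $ i" using i by simp
    qed (use Muc BT in simp)
    have h3: "A x1 *\<^sub>v ?dy - B *\<^sub>v ?du = 0\<^sub>v N"
    proof (rule eq_vecI)
      fix i assume "i < dim_vec (0\<^sub>v N :: real vec)" hence i: "i < N" by simp
      have e: "(A x1 *\<^sub>v y x1 b c d) $ i - (B *\<^sub>v u x1 b c d) $ i
          = (c3 $ i + 2 * c4 $ i / 1000) + b * (- (g0 $ i / 100)) + c * (c3 $ i / 1000) + d * (c4 $ i / 1000)"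
        if "b \<in> I1" "c \<in> I1" "d \<in> I1" for b c d
      proof -
        have "(A x1 *\<^sub>v y x1 b c d - B *\<^sub>v u x1 b c d) $ i = (- g b - b3 c - b4 d) $ i" using eq3[OF xs(1) that] by simp
        moreover have "(A x1 *\<^sub>v y x1 b c d - B *\<^sub>v u x1 b c d) $ i = (A x1 *\<^sub>v y x1 b c d) $ i - (B *\<^sub>v u x1 b c d) $ i"
          using i B by simp
        moreover have "(- g b - b3 c - b4 d) $ i = (c3 $ i + 2 * c4 $ i / 1000) + b * (- (g0 $ i / 100)) + c * (c3 $ i / 1000) + d * (c4 $ i / 1000)"
          using i g0 c3 c4 by (simp add: g_def b3_def b4_def field_simps)
        ultimately show ?thesis by simp
      qed
      have "(A x1 *\<^sub>v ?dy - B *\<^sub>v ?du) $ i = (A x1 *\<^sub>v ?dy) $ i - (B *\<^sub>v ?du) $ i" using i B by simp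
      also have "\<dots> = ((A x1 *\<^sub>v y x1 x2 x3 x4) $ i - (A x1 *\<^sub>v Y x1 x2 x3 x4) $ i) - ((B *\<^sub>v u x1 x2 x3 x4) $ i - (B *\<^sub>v U x1 x2 x3 x4) $ i)"
        using mi[OF Ac YX YC i] mi[OF B UX UC i] by simp
      also have "\<dots> = 0" unfolding combY[OF Ac i] combU[OF B i]
        by (rule ar3[OF e[OF I01(1) I01(1) I01(1)] e[OF I01(2) I01(1) I01(1)] e[OF I01(1) I01(2) I01(1)] e[OF I01(1) I01(1) I01(2)] e[OF xs(2-4)]])
      finally show "(A x1 *\<^sub>v ?dy - B *\<^sub>v ?du) $ i = 0\<^sub>v N $ i" using i by simp
    qed (use Ac B in simp)
    have z: "?dy = 0\<^sub>v N \<and> ?du = 0\<^sub>v N \<and> ?dl = 0\<^sub>v N"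
      by (rule homog[OF My Mu B Ac A_sym[OF xs(1)] A_inv[OF xs(1)] dC h1 h2 h3])
    show ?thesis using z vec_sub_zero[OF YX YC] vec_sub_zero[OF UX UC] vec_sub_zero[OF LX LC] by auto
  qed
  define S where "S x1 x2 x3 x4 = y x1 x2 x3 x4 @\<^sub>v u x1 x2 x3 x4 @\<^sub>v lam x1 x2 x3 x4" for x1 x2 x3 x4 :: real
  define sj where "sj x1 j = S x1 (if j = (1::nat) then 1 else 0) (if j = 2 then 1 else 0) (if j = 3 then 1 else 0)" for x1 :: real and j :: nat
  define Z1 where "Z1 x1 = mat (3 * N) 4 (\<lambda>(i,j). if j = 0 then sj x1 0 $ i else sj x1 j $ i - sj x1 0 $ i)" for x1 :: real
  define z4 where "z4 x4 = mat 2 1 (\<lambda>(k,_). if k = 0 then 1 else x4)" for x4 :: real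
  define z3 where "z3 x3 = mat 3 2 (\<lambda>(j,k). if j = 0 then (if k = 0 then 1 else 0) else if j = 1 then (if k = 0 then x3 else 0) else (if k = 1 then 1 else (0::real)))" for x3 :: real
  define z2 where "z2 x2 = mat 4 3 (\<lambda>(j,k). if j = 0 then (if k = 0 then 1 else 0) else if j = 1 then (if k = 0 then x2 else 0)
              else if j = 2 then (if k = 1 then 1 else 0) else (if k = 2 then 1 else (0::real)))" for x2 :: real
  have Sidx: "S x1 x2 x3 x4 $ i = sj x1 0 $ i + x2 * (sj x1 1 $ i - sj x1 0 $ i) + x3 * (sj x1 2 $ i - sj x1 0 $ i) + x4 * (sj x1 3 $ i - sj x1 0 $ i)"
    if xs: "x1 \<in> I1" "x2 \<in> I1" "x3 \<in> I1" "x4 \<in> I1" and i: "i < 3 * N" for x1 x2 x3 x4 i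
  proof -
    have Cy: "y x1 b c d \<in> carrier_vec N" and Cu: "u x1 b c d \<in> carrier_vec N" and Cl: "lam x1 b c d \<in> carrier_vec N"
      if "b \<in> I1" "c \<in> I1" "d \<in> I1" for b c d using sol_carrier[OF xs(1) that] by auto
    have dims: "dim_vec (y x1 b c d) = N" "dim_vec (u x1 b c d) = N" "dim_vec (lam x1 b c d) = N"
      if "b \<in> I1" "c \<in> I1" "d \<in> I1" for b c d using Cy[OF that] Cu[OF that] Cl[OF that] by auto
    note D = dims[OF I01(1) I01(1) I01(1)] dims[OF I01(2) I01(1) I01(1)] dims[OF I01(1) I01(2) I01(1)]
      dims[OF I01(1) I01(1) I01(2)] dims[OF xs(2-4)]
    note C = Cy[OF I01(1) I01(1) I01(1)] Cy[OF I01(2) I01(1) I01(1)] Cy[OF I01(1) I01(2) I01(1)] Cy[OF I01(1) I01(1) I01(2)]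
      Cu[OF I01(1) I01(1) I01(1)] Cu[OF I01(2) I01(1) I01(1)] Cu[OF I01(1) I01(2) I01(1)] Cu[OF I01(1) I01(1) I01(2)]
      Cl[OF I01(1) I01(1) I01(1)] Cl[OF I01(2) I01(1) I01(1)] Cl[OF I01(1) I01(2) I01(1)] Cl[OF I01(1) I01(1) I01(2)]
    have a: "y x1 x2 x3 x4 = Y x1 x2 x3 x4" "u x1 x2 x3 x4 = U x1 x2 x3 x4" "lam x1 x2 x3 x4 = L x1 x2 x3 x4"
      using aff[OF xs] by auto
    have sj0: "sj x1 0 = S x1 0 0 0" and sj1: "sj x1 1 = S x1 1 0 0" and sj2: "sj x1 2 = S x1 0 1 0" and sj3: "sj x1 3 = S x1 0 0 1"
      by (simp_all add: sj_def)
    note AP = app3[OF dims[OF I01(1) I01(1) I01(1)] i] app3[OF dims[OF I01(2) I01(1) I01(1)] i]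
      app3[OF dims[OF I01(1) I01(2) I01(1)] i] app3[OF dims[OF I01(1) I01(1) I01(2)] i] app3[OF dims[OF xs(2-4)] i]
    have E: "S x1 x2 x3 x4 $ i = (if i < N then Y x1 x2 x3 x4 $ i else if i < 2 * N then U x1 x2 x3 x4 $ (i - N) else L x1 x2 x3 x4 $ (i - N - N))"
      unfolding S_def AP(5) by (simp only: a)
    show ?thesis
    proof (cases "i < N")
      case True
      show ?thesis unfolding E sj0 sj1 sj2 sj3 unfolding S_def unfolding AP(1-4) using True
        by (simp only: if_True Y_def idx_comb[OF C(1-4) True])
    next
      case F1: False
      show ?thesis
      proof (cases "i < 2 * N")
        case True
        have iN: "i - N < N" using True F1 by arith
        show ?thesis unfolding E sj0 sj1 sj2 sj3 unfolding S_def unfolding AP(1-4) using True F1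
          by (simp only: if_True if_False Y_def U_def idx_comb[OF C(5-8) iN])
      next
        case False
        have iN: "i - N - N < N" using False F1 i by arith
        show ?thesis unfolding E sj0 sj1 sj2 sj3 unfolding S_def unfolding AP(1-4) using False F1
          by (simp only: if_True if_False L_def idx_comb[OF C(9-12) iN])
      qed
    qed
  qed
  have carr: "\<forall>x1\<in>I1. Z1 x1 \<in> carrier_mat (3 * N) 4" "\<forall>x2\<in>I1. z2 x2 \<in> carrier_mat 4 3"
      "\<forall>x3\<in>I1. z3 x3 \<in> carrier_mat 3 2" "\<forall>x4\<in>I1. z4 x4 \<in> carrier_mat 2 1"
    by (simp_all add: Z1_def z2_def z3_def z4_def)
  have main: "\<forall>x1 \<in> I1. \<forall>x2 \<in> I1. \<forall>x3 \<in> I1. \<forall>x4 \<in> I1.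
      y x1 x2 x3 x4 @\<^sub>v u x1 x2 x3 x4 @\<^sub>v lam x1 x2 x3 x4 = col (Z1 x1 * z2 x2 * z3 x3 * z4 x4) 0"
  proof (intro ballI)
    fix x1 x2 x3 x4 assume xs: "x1 \<in> I1" "x2 \<in> I1" "x3 \<in> I1" "x4 \<in> I1"
    have Zc: "Z1 x1 \<in> carrier_mat (3 * N) 4" "z2 x2 \<in> carrier_mat 4 3" "z3 x3 \<in> carrier_mat 3 2" "z4 x4 \<in> carrier_mat 2 1"
      by (simp_all add: Z1_def z2_def z3_def z4_def)
    have "Z1 x1 * z2 x2 * z3 x3 * z4 x4 = (Z1 x1 * z2 x2) * (z3 x3 * z4 x4)"
      using Zc by (intro assoc_mult_mat[of _ "3 * N" 3 _ 2 _ 1]) auto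
    also have "\<dots> = Z1 x1 * (z2 x2 * (z3 x3 * z4 x4))"
      using Zc by (intro assoc_mult_mat[of _ "3 * N" 4 _ 3 _ 1]) auto
    also have "z2 x2 * (z3 x3 * z4 x4) = mat 4 1 (\<lambda>(j,_). if j = 0 then 1 else if j = 1 then x2 else if j = 2 then x3 else x4)"
      unfolding z2_def z3_def z4_def by (rule z_prod)
    finally have P: "Z1 x1 * z2 x2 * z3 x3 * z4 x4 = Z1 x1 * mat 4 1 (\<lambda>(j,_). if j = 0 then 1 else if j = 1 then x2 else if j = 2 then x3 else x4)" .
    have "S x1 x2 x3 x4 = col (Z1 x1 * z2 x2 * z3 x3 * z4 x4) 0"
    proof (rule eq_vecI)
      fix i assume "i < dim_vec (col (Z1 x1 * z2 x2 * z3 x3 * z4 x4) 0)"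
      hence i: "i < 3 * N" unfolding P by (simp add: Z1_def)
      have "col (Z1 x1 * z2 x2 * z3 x3 * z4 x4) 0 $ i = sj x1 0 $ i + (sj x1 1 $ i - sj x1 0 $ i) * x2
          + (sj x1 2 $ i - sj x1 0 $ i) * x3 + (sj x1 3 $ i - sj x1 0 $ i) * x4"
        unfolding P by (simp only: Z1_def colprod[OF i]) simp
      thus "S x1 x2 x3 x4 $ i = col (Z1 x1 * z2 x2 * z3 x3 * z4 x4) 0 $ i"
        unfolding Sidx[OF xs i] by (simp add: algebra_simps)
    next
      have "dim_vec (S x1 x2 x3 x4) = 3 * N" using sol_carrier[OF xs] by (auto simp: S_def)
      thus "dim_vec (S x1 x2 x3 x4) = dim_vec (col (Z1 x1 * z2 x2 * z3 x3 * z4 x4) 0)" unfolding P by (simp add: Z1_def)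
    qed
    thus "y x1 x2 x3 x4 @\<^sub>v u x1 x2 x3 x4 @\<^sub>v lam x1 x2 x3 x4 = col (Z1 x1 * z2 x2 * z3 x3 * z4 x4) 0"
      by (simp add: S_def)
  qed
  show ?thesis
    apply (rule exI[of _ 4], rule exI[of _ 3], rule exI[of _ 2], rule exI[of _ Z1], rule exI[of _ z2], rule exI[of _ z3], rule exI[of _ z4])
    using carr main by simp
qed

end
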